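(* (i) For every normalized one-parameter subgroup $\lambda$ of $\mathrm{SL}_2\times\mathrm{SL}_3$, the set $M^{\ominus}(\lambda)$ is contained in $M^{\ominus}(\lambda'_i)$ for some $i\in\{1,\dots,7\}$, where $\lambda'_1=(3,-3,2,2,-4)$, $\lambda'_2=(3,-3,2,0,-2)$, $\lambda'_3=(3,-3,4,-2,-2)$, $\lambda'_4=(0,0,2,-1,-1)$, $\lambda'_5=(1,-1,2,0,-2)$, $\lambda'_6=(0,0,1,1,-2)$, $\lambda'_7=(1,-1,0,0,0)$. (ii) A $(2,3)$-hypersurface $S=\{f=0\}\subset\mathbb{P}^1\times\mathbb{P}^2$ is not properly stable if $f$ is of one of the following forms, where $c,c_i$ denote cubic forms, $q,q_i$ quadratic forms, $l$ linear forms in the indicated variables and $\mu,\nu$ constants: (N1) $f=x_1^2c(y_0,y_1,y_2)+x_0x_1y_2q(y_0,y_1)+x_0^2y_2^2l(y_0,y_1,y_2)$; (N2) $f=x_1^2c_0(y_0,y_1,y_2)+x_0x_1[c_1(y_1,y_2)+y_0y_2l(y_1,y_2)]+\mu x_0^2y_2^3$; (N3) $f=x_1^2[c_1(y_1,y_2)+y_0q_1(y_1,y_2)+y_0^2l(y_1,y_2)]+x_0x_1[c_2(y_1,y_2)+y_0q_2(y_1,y_2)]+x_0^2c_0(y_1,y_2)$; (N4) $f=x_1^2[c_0(y_1,y_2)+y_0q_0(y_1,y_2)]+x_0x_1[c_1(y_1,y_2)+y_0q_1(y_1,y_2)]+x_0^2[c_2(y_1,y_2)+y_0q_2(y_1,y_2)]$;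 (N5) $f=x_1^2[c_0(y_1,y_2)+y_0q_0(y_1,y_2)+\mu y_0^2y_2]+x_0x_1[c_1(y_1,y_2)+y_0y_2l(y_1,y_2)]+x_0^2y_2(q_2(y_1,y_2)+\nu y_0y_2)$; (N6) $f=y_2\cdot q(x_0,x_1,y_0,y_1,y_2)$ with $q$ bihomogeneous of bidegree $(2,2)$; (N7) $f=x_1[x_0c_0(y_0,y_1,y_2)+x_1c_1(y_0,y_1,y_2)]$.
   Context: Bihomogeneous coordinates $(x_0,x_1;y_0,y_1,y_2)$ on $\mathbb{P}^1\times\mathbb{P}^2$; stability refers to GIT for the natural action of $\mathrm{SL}_2\times\mathrm{SL}_3$ on $\mathbb{P}(H^0(\mathcal{O}(2,3)))$. A tuple $(a,-a,b,c,-b-c)$ denotes the one-parameter subgroup $t\mapsto\mathrm{diag}(t^a,t^{-a},t^b,t^c,t^{-b-c})$ acting on $(x_0,x_1,y_0,y_1,y_2)$; it is normalized if $a\geq0$ and $b\geq c\geq-b-c$. The weight of the monomial $x_0^ux_1^{2-u}y_0^vy_1^wy_2^{3-v-w}$ with respect to it is $au-a(2-u)+bv+cw+(-b-c)(3-v-w)$. $M^{\ominus}(\lambda)$ is the set of bidegree $(2,3)$ monomials of non-positive weight with respect to $\lambda$. *)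

theory Defs
  imports "HOL-Analysis.Analysis"
begin

text \<open>A monomial x0^u x1^(2-u) y0^v y1^w y2^(3-v-w) is encoded by (u,v,w).
  A diagonal one-parameter subgroup (a,-a,b,c,-b-c) is encoded by (a,b,c).\<close>

definition mons :: "(nat \<times> nat \<times> nat) set" where
  "mons = {(u, v, w). u \<le> 2 \<and> v + w \<le> 3}"

definition wt :: "int \<times> int \<times> int \<Rightarrow> nat \<times> nat \<times> nat \<Rightarrow> int" where
  "wt l m = (case l of (a, b, c) \<Rightarrow> case m of (u, v, w) \<Rightarrow>
      a * int u - a * (2 - int u) + b * int v + c * int w + (- b - c) * (3 - int v - int w))"

definition Mneg :: "int \<times> int \<times> int \<Rightarrow> (nat \<times> nat \<times> nat) set" where
  "Mneg l = {m \<in> mons. wt l m \<le> 0}"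

definition normalized_ops :: "int \<times> int \<times> int \<Rightarrow> bool" where
  "normalized_ops l = (case l of (a, b, c) \<Rightarrow> a \<ge> 0 \<and> b \<ge> c \<and> c \<ge> - b - c)"

definition nontrivial_ops :: "int \<times> int \<times> int \<Rightarrow> bool" where
  "nontrivial_ops l = (l \<noteq> (0, 0, 0))"

definition lam' :: "nat \<Rightarrow> int \<times> int \<times> int" where
  "lam' i = (if i = 1 then (3, 2, 2) else if i = 2 then (3, 2, 0) else if i = 3 then (3, 4, -2)
     else if i = 4 then (0, 2, -1) else if i = 5 then (1, 2, 0) else if i = 6 then (0, 1, 1)
     else (1, 0, 0))"

text \<open>A bihomogeneous form is regarded as a polynomial function on C^2 x C^3.\<close>
type_synonym form23 = "complex^2 \<Rightarrow> complex^3 \<Rightarrow> complex"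

definition SL2 :: "(complex^2^2) set" where "SL2 = {A. det A = 1}"
definition SL3 :: "(complex^3^3) set" where "SL3 = {B. det B = 1}"

definition act :: "complex^2^2 \<Rightarrow> complex^3^3 \<Rightarrow> form23 \<Rightarrow> form23" where
  "act A B F = (\<lambda>x y. F (A *v x) (B *v y))"

definition orbit :: "form23 \<Rightarrow> form23 set" where
  "orbit F = {act A B F | A B. A \<in> SL2 \<and> B \<in> SL3}"

text \<open>Closedness of the orbit in the (finite-dimensional) space of forms; on this space
  pointwise convergence coincides with convergence of coefficients.\<close>
definition closed_orbit :: "form23 \<Rightarrow> bool" where
  "closed_orbit F = (\<forall>g h H. (\<forall>n. g n \<in> SL2 \<and> h n \<in> SL3) \<and>
      (\<forall>x y. (\<lambda>n. act (g n) (h n) F x y) \<longlonglongrightarrow> H x y) \<longrightarrow> H \<in> orbit F)"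

definition stabilizer :: "form23 \<Rightarrow> ((complex^2^2) \<times> (complex^3^3)) set" where
  "stabilizer F = {(A, B). A \<in> SL2 \<and> B \<in> SL3 \<and> act A B F = F}"

definition properly_stable :: "form23 \<Rightarrow> bool" where
  "properly_stable F = (F \<noteq> (\<lambda>x y. 0) \<and> closed_orbit F \<and> finite (stabilizer F))"

definition form3 :: "nat \<Rightarrow> (nat \<times> nat \<Rightarrow> complex) \<Rightarrow> complex^3 \<Rightarrow> complex" where
  "form3 d a y = (\<Sum>(v, w)\<in>{(v, w). v + w \<le> d}. a (v, w) * y$0 ^ v * y$1 ^ w * y$2 ^ (d - v - w))"

definition form2 :: "nat \<Rightarrow> (nat \<Rightarrow> complex) \<Rightarrow> complex \<Rightarrow> complex \<Rightarrow> complex" where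
  "form2 d a s t = (\<Sum>w\<le>d. a w * s ^ w * t ^ (d - w))"

definition form22 :: "(nat \<Rightarrow> nat \<times> nat \<Rightarrow> complex) \<Rightarrow> complex^2 \<Rightarrow> complex^3 \<Rightarrow> complex" where
  "form22 a x y = (\<Sum>u\<le>2. x$0 ^ u * x$1 ^ (2 - u) * form3 2 (a u) y)"

end

theory Submission
  imports Defs
begin


lemma act_act: "act A B (act C D F) = act (C ** A) (D ** B) F"
  by (simp add: act_def fun_eq_iff matrix_vector_mul_assoc)

lemma SL2_inv: assumes "A \<in> SL2" obtains A' where "A' \<in> SL2" "A ** A' = mat 1" "A' ** A = mat 1"
proof -
  have "invertible A" using assms by (simp add: SL2_def invertible_det_nz)
  then obtain A' where 1: "A ** A' = mat 1" "A' ** A = mat 1" unfolding invertible_def by auto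
  then have "det A * det A' = 1" by (metis det_I det_mul)
  then have "det A' = 1" using assms by (simp add: SL2_def)
  then show ?thesis using that 1 by (simp add: SL2_def)
qed

lemma SL3_inv: assumes "A \<in> SL3" obtains A' where "A' \<in> SL3" "A ** A' = mat 1" "A' ** A = mat 1"
proof -
  have "invertible A" using assms by (simp add: SL3_def invertible_det_nz)
  then obtain A' where 1: "A ** A' = mat 1" "A' ** A = mat 1" unfolding invertible_def by auto
  then have "det A * det A' = 1" by (metis det_I det_mul)
  then have "det A' = 1" using assms by (simp add: SL3_def)
  then show ?thesis using that 1 by (simp add: SL3_def)
qed

lemma SL2_mul: "A \<in> SL2 \<Longrightarrow> B \<in> SL2 \<Longrightarrow> A ** B \<in> SL2"
  by (simp add: SL2_def det_mul)
lemma SL3_mul: "A \<in> SL3 \<Longrightarrow> B \<in> SL3 \<Longrightarrow> A ** B \<in> SL3"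
  by (simp add: SL3_def det_mul)

lemma stab_transfer:
  assumes A: "A \<in> SL2" and B: "B \<in> SL3" and fin: "finite (stabilizer F)"
  shows "finite (stabilizer (act A B F))"
proof -
  obtain A' where A': "A' \<in> SL2" "A ** A' = mat 1" "A' ** A = mat 1" using SL2_inv[OF A] by blast
  obtain B' where B': "B' \<in> SL3" "B ** B' = mat 1" "B' ** B = mat 1" using SL3_inv[OF B] by blast
  let ?f = "\<lambda>(X::complex^2^2, Y::complex^3^3). (A' ** X ** A, B' ** Y ** B)"
  have "stabilizer (act A B F) \<subseteq> ?f ` stabilizer F"
  proof
    fix p assume p: "p \<in> stabilizer (act A B F)"
    obtain g h where gh: "p = (g, h)" by fastforce
    have g: "g \<in> SL2" and h: "h \<in> SL3" and inv: "act g h (act A B F) = act A B F"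
      using p gh by (auto simp: stabilizer_def)
    have "act (A ** g ** A') (B ** h ** B') F = act A' B' (act g h (act A B F))"
      by (simp add: act_act matrix_mul_assoc)
    also have "\<dots> = F" using inv A' B' by (simp add: act_act) (simp add: act_def)
    finally have st: "(A ** g ** A', B ** h ** B') \<in> stabilizer F"
      using g h A A' B B' by (auto simp: stabilizer_def intro!: SL2_mul SL3_mul)
    have "p = ?f (A ** g ** A', B ** h ** B')"
    proof -
      have "A' ** (A ** g ** A') ** A = (A' ** A) ** g ** (A' ** A)" by (simp only: matrix_mul_assoc)
      then have "A' ** (A ** g ** A') ** A = g" using A'(3) by simp
      moreover have "B' ** (B ** h ** B') ** B = (B' ** B) ** h ** (B' ** B)" by (simp only: matrix_mul_assoc)
      then have "B' ** (B ** h ** B') ** B = h" using B'(3) by simp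
      ultimately show ?thesis using gh by simp
    qed
    then show "p \<in> ?f ` stabilizer F" using st by blast
  qed
  then show ?thesis using fin finite_subset by blast
qed

lemma not_ps_general:
  fixes G :: "complex \<Rightarrow> complex^2^2" and K :: "complex \<Rightarrow> complex^3^3"
    and P :: "complex \<Rightarrow> form23" and F :: form23
  assumes SL: "\<And>e. e \<noteq> 0 \<Longrightarrow> G e \<in> SL2 \<and> K e \<in> SL3"
    and mult: "\<And>e d. e \<noteq> 0 \<Longrightarrow> d \<noteq> 0 \<Longrightarrow> G e ** G d = G (d * e) \<and> K e ** K d = K (d * e)"
    and inj: "inj (\<lambda>n::nat. (G (of_nat (Suc n)), K (of_nat (Suc n))))"
    and eq: "\<And>e. e \<noteq> 0 \<Longrightarrow> act (G e) (K e) F = P e"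
    and cont: "\<And>x y. isCont (\<lambda>e. P e x y) 0"
  shows "\<not> properly_stable F"
proof
  assume ps: "properly_stable F"
  define en where "en n = 1 / (of_nat (Suc n) :: complex)" for n
  have en0: "en n \<noteq> 0" for n using of_nat_eq_0_iff[of "Suc n", where 'a=complex] by (simp add: en_def)
  have enlim: "en \<longlonglongrightarrow> 0"
    unfolding en_def by (rule LIMSEQ_Suc[OF lim_1_over_n])
  have lim: "\<forall>x y. (\<lambda>n. act (G (en n)) (K (en n)) F x y) \<longlonglongrightarrow> P 0 x y"
  proof (intro allI)
    fix x y
    have "(\<lambda>n. P (en n) x y) \<longlonglongrightarrow> P 0 x y"
      using isCont_tendsto_compose[OF cont enlim] by simp
    then show "(\<lambda>n. act (G (en n)) (K (en n)) F x y) \<longlonglongrightarrow> P 0 x y"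
      using eq[OF en0] by simp
  qed
  have co: "closed_orbit F" using ps by (simp add: properly_stable_def)
  have sl: "\<forall>n. G (en n) \<in> SL2 \<and> K (en n) \<in> SL3" using SL en0 by simp
  have "P 0 \<in> orbit F"
    using co[unfolded closed_orbit_def, rule_format, of "\<lambda>n. G (en n)" "\<lambda>n. K (en n)" "P 0"] sl lim
    by simp
  then obtain A B where AB: "A \<in> SL2" "B \<in> SL3" "P 0 = act A B F"
    unfolding orbit_def by blast
  have fin: "finite (stabilizer (P 0))"
    using stab_transfer[OF AB(1,2)] ps AB(3) by (simp add: properly_stable_def)
  have invar: "act (G s) (K s) (P 0) = P 0" if s: "s \<noteq> 0" for s
  proof (rule ext, rule ext)
    fix x y
    have 1: "P e (G s *v x) (K s *v y) = P (s * e) x y" if e: "e \<noteq> 0" for e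
    proof -
      have "act (G s) (K s) (P e) = act (G s) (K s) (act (G e) (K e) F)" using eq e by simp
      also have "\<dots> = act (G (s * e)) (K (s * e)) F" using mult[OF e s] by (simp add: act_act)
      also have "\<dots> = P (s * e)" using eq e s by simp
      finally show ?thesis by (simp add: act_def fun_eq_iff)
    qed
    have l1: "((\<lambda>e. P e (G s *v x) (K s *v y)) \<longlongrightarrow> P 0 (G s *v x) (K s *v y)) (at 0)"
      using cont by (simp add: isCont_def)
    have "((\<lambda>e. s * e) \<longlongrightarrow> 0) (at (0::complex))"
      by (auto intro!: tendsto_eq_intros)
    then have l2: "((\<lambda>e. P (s * e) x y) \<longlongrightarrow> P 0 x y) (at 0)"
      using isCont_tendsto_compose[OF cont] by fastforce
    have l3: "((\<lambda>e. P e (G s *v x) (K s *v y)) \<longlongrightarrow> P 0 x y) (at 0)"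
      by (rule tendsto_cong[THEN iffD1, OF _ l2]) (auto simp: eventually_at_filter 1)
    show "act (G s) (K s) (P 0) x y = P 0 x y"
      using tendsto_unique[OF _ l1 l3] by (simp add: act_def)
  qed
  have "range (\<lambda>n::nat. (G (of_nat (Suc n)), K (of_nat (Suc n)))) \<subseteq> stabilizer (P 0)"
    using invar SL by (auto simp: stabilizer_def simp del: of_nat_Suc)
  then have "finite (range (\<lambda>n::nat. (G (of_nat (Suc n)), K (of_nat (Suc n)))))"
    using fin finite_subset by blast
  then show False using inj finite_imageD by fastforce
qed



definition dg2 :: "complex \<Rightarrow> complex \<Rightarrow> complex^2^2" where
  "dg2 p q = (\<chi> i j. if i = j then (if i = 0 then p else q) else 0)"
definition dg3 :: "complex \<Rightarrow> complex \<Rightarrow> complex \<Rightarrow> complex^3^3" where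
  "dg3 p q r = (\<chi> i j. if i = j then (if i = 0 then p else if i = 1 then q else r) else 0)"

lemma two_eq_0: "(2::2) = 0" by simp
lemma three_eq_0: "(3::3) = 0" by simp

lemma dg2_mv [simp]: "(dg2 p q *v x) $ 0 = p * x$0" "(dg2 p q *v x) $ 1 = q * x$1"
  by (simp_all add: matrix_vector_mult_def dg2_def sum_2 two_eq_0)

lemma dg3_mv [simp]: "(dg3 p q r *v y) $ 0 = p * y$0" "(dg3 p q r *v y) $ 1 = q * y$1"
   "(dg3 p q r *v y) $ 2 = r * y$2"
  by (simp_all add: matrix_vector_mult_def dg3_def sum_3 three_eq_0)

lemma dg2_mul: "dg2 p q ** dg2 p' q' = dg2 (p' * p) (q' * q)"
  by (simp add: matrix_matrix_mult_def dg2_def sum_2 two_eq_0 vec_eq_iff forall_2)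

lemma dg3_mul: "dg3 p q r ** dg3 p' q' r' = dg3 (p' * p) (q' * q) (r' * r)"
  by (simp add: matrix_matrix_mult_def dg3_def sum_3 three_eq_0 vec_eq_iff forall_3)

lemma dg2_det: "det (dg2 p q) = p * q"
  by (simp add: det_2 dg2_def two_eq_0)

lemma dg3_det: "det (dg3 p q r) = p * q * r"
  by (simp add: det_3 dg3_def three_eq_0)

lemma dg2_eq: "dg2 p q = dg2 p' q' \<longleftrightarrow> p = p' \<and> q = q'"
  by (auto simp: dg2_def vec_eq_iff forall_2 two_eq_0 dest: spec[of _ 0] spec[of _ 1])

lemma dg3_eq: "dg3 p q r = dg3 p' q' r' \<longleftrightarrow> p = p' \<and> q = q' \<and> r = r'"
  apply (rule iffI)
   apply (drule arg_cong[where f="\<lambda>M. (M$0$0, M$1$1, M$2$2)"])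
   apply (simp add: dg3_def)
  apply simp
  done



definition F3 :: "nat \<Rightarrow> (nat \<times> nat \<Rightarrow> complex) \<Rightarrow> complex \<Rightarrow> complex \<Rightarrow> complex \<Rightarrow> complex" where
  "F3 d a p q r = (\<Sum>(v, w)\<in>{(v, w). v + w \<le> d}. a (v, w) * p ^ v * q ^ w * r ^ (d - v - w))"

lemma form3_F3: "form3 d a y = F3 d a (y$0) (y$1) (y$2)"
  by (simp add: form3_def F3_def)

lemma F3_hom: "F3 d a (k * p) (k * q) (k * r) = k ^ d * F3 d a p q r"
  unfolding F3_def sum_distrib_left
proof (rule sum.cong[OF refl])
  fix x assume "x \<in> {(v, w). v + w \<le> d}"
  then obtain v w where x: "x = (v, w)" "v + w \<le> d" by auto
  have "k ^ d = k ^ v * k ^ w * k ^ (d - v - w)"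
    using x(2) by (simp add: power_add[symmetric])
  then show "(case x of (v, w) \<Rightarrow> a (v, w) * (k * p) ^ v * (k * q) ^ w * (k * r) ^ (d - v - w)) =
        k ^ d * (case x of (v, w) \<Rightarrow> a (v, w) * p ^ v * q ^ w * r ^ (d - v - w))"
    using x by (simp add: power_mult_distrib)
qed

lemma form2_hom: "form2 d a (k * s) (k * t) = k ^ d * form2 d a s t"
  unfolding form2_def sum_distrib_left
proof (rule sum.cong[OF refl])
  fix w assume "w \<in> {..d}"
  then have "k ^ d = k ^ w * k ^ (d - w)" by (simp add: power_add[symmetric])
  then show "a w * (k * s) ^ w * (k * t) ^ (d - w) = k ^ d * (a w * s ^ w * t ^ (d - w))"
    by (simp add: power_mult_distrib)
qed

lemma F3_cont [continuous_intros]: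
  "continuous F p \<Longrightarrow> continuous F q \<Longrightarrow> continuous F r \<Longrightarrow>
   continuous F (\<lambda>e. F3 d a (p e) (q e) (r e))"
  unfolding F3_def split_def by (intro continuous_intros)

lemma form2_cont [continuous_intros]:
  "continuous F p \<Longrightarrow> continuous F q \<Longrightarrow> continuous F (\<lambda>e. form2 d a (p e) (q e))"
  unfolding form2_def by (intro continuous_intros)

lemma N7: "\<not> properly_stable (\<lambda>x y. x$1 * (x$0 * form3 3 c0 y + x$1 * form3 3 c1 y))"
proof (rule not_ps_general[where G="\<lambda>e. dg2 (1/e) e" and K="\<lambda>e. dg3 1 1 1"
      and P="\<lambda>e x y. x$1 * x$0 * form3 3 c0 y + e^2 * x$1^2 * form3 3 c1 y"])
  show "\<And>e. e \<noteq> 0 \<Longrightarrow> dg2 (1/e) e \<in> SL2 \<and> dg3 1 1 1 \<in> SL3"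
    by (simp add: SL2_def SL3_def dg2_det dg3_det)
  show "\<And>e d. e \<noteq> 0 \<Longrightarrow> d \<noteq> 0 \<Longrightarrow> dg2 (1/e) e ** dg2 (1/d) d = dg2 (1/(d*e)) (d*e) \<and> dg3 1 1 1 ** dg3 1 1 1 = dg3 1 1 1"
    by (simp add: dg2_mul dg3_mul)
  show "inj (\<lambda>n::nat. (dg2 (1/of_nat (Suc n)) (of_nat (Suc n)), dg3 1 1 1))"
    by (auto simp: inj_def dg2_eq simp del: of_nat_Suc)
  show "\<And>e. e \<noteq> 0 \<Longrightarrow> act (dg2 (1/e) e) (dg3 1 1 1) (\<lambda>x y. x$1 * (x$0 * form3 3 c0 y + x$1 * form3 3 c1 y)) =
     (\<lambda>x y. x$1 * x$0 * form3 3 c0 y + e^2 * x$1^2 * form3 3 c1 y)"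
    by (auto simp: act_def fun_eq_iff field_simps power2_eq_square form3_F3)
  show "\<And>x y. isCont (\<lambda>e. x$1 * x$0 * form3 3 c0 y + e^2 * x$1^2 * form3 3 c1 y) 0"
    by (intro continuous_intros)
qed

lemma of_nat_pow_inj: "(of_nat (Suc x) :: complex) ^ k = of_nat (Suc y) ^ k \<Longrightarrow> 0 < k \<Longrightarrow> x = y"
proof -
  assume h: "(of_nat (Suc x) :: complex) ^ k = of_nat (Suc y) ^ k" and k: "0 < k"
  have "(of_nat (Suc x ^ k) :: complex) = of_nat (Suc y ^ k)" by (simp only: of_nat_power h)
  then have "Suc x ^ k = Suc y ^ k" by (simp only: of_nat_eq_iff)
  then show "x = y" using k power_eq_iff_eq_base[of k "Suc x" "Suc y"] by simp
qed

lemma F3_hom2: "p' = k * p \<Longrightarrow> q' = k * q \<Longrightarrow> r' = k * r \<Longrightarrow> F3 d a p' q' r' = k ^ d * F3 d a p q r"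
  by (simp add: F3_hom)

lemma N1: "\<not> properly_stable (\<lambda>x y.
         x$1^2 * form3 3 c y + x$0 * x$1 * y$2 * form2 2 q (y$0) (y$1)
         + x$0^2 * y$2^2 * form3 1 l y)"
proof (rule not_ps_general[where G="\<lambda>e. dg2 (1/e^3) (e^3)" and K="\<lambda>e. dg3 (1/e^2) (1/e^2) (e^4)"
      and P="\<lambda>e x y. x$1^2 * F3 3 c (y$0) (y$1) (e^6 * y$2) + x$0 * x$1 * y$2 * form2 2 q (y$0) (y$1)
         + x$0^2 * y$2^2 * F3 1 l (y$0) (y$1) (e^6 * y$2)"])
  show "\<And>e. e \<noteq> 0 \<Longrightarrow> dg2 (1/e^3) (e^3) \<in> SL2 \<and> dg3 (1/e^2) (1/e^2) (e^4) \<in> SL3"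
    by (simp add: SL2_def SL3_def dg2_det dg3_det field_simps flip: power_add)
  show "\<And>e d. e \<noteq> 0 \<Longrightarrow> d \<noteq> 0 \<Longrightarrow> dg2 (1/e^3) (e^3) ** dg2 (1/d^3) (d^3) = dg2 (1/(d*e)^3) ((d*e)^3)
     \<and> dg3 (1/e^2) (1/e^2) (e^4) ** dg3 (1/d^2) (1/d^2) (d^4) = dg3 (1/(d*e)^2) (1/(d*e)^2) ((d*e)^4)"
    by (simp add: dg2_mul dg3_mul power_mult_distrib)
  show "inj (\<lambda>n::nat. (dg2 (1/of_nat (Suc n)^3) (of_nat (Suc n)^3), dg3 (1/of_nat (Suc n)^2) (1/of_nat (Suc n)^2) (of_nat (Suc n)^4)))"
    by (rule injI) (auto simp: dg2_eq simp del: of_nat_Suc dest: of_nat_pow_inj)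
  show "act (dg2 (1/e^3) (e^3)) (dg3 (1/e^2) (1/e^2) (e^4)) (\<lambda>x y.
         x$1^2 * form3 3 c y + x$0 * x$1 * y$2 * form2 2 q (y$0) (y$1)
         + x$0^2 * y$2^2 * form3 1 l y) = (\<lambda>x y. x$1^2 * F3 3 c (y$0) (y$1) (e^6 * y$2) + x$0 * x$1 * y$2 * form2 2 q (y$0) (y$1)
         + x$0^2 * y$2^2 * F3 1 l (y$0) (y$1) (e^6 * y$2))" if e: "e \<noteq> 0" for e
  proof (rule ext, rule ext)
    fix x :: "complex^2" and y :: "complex^3"
    have h1: "F3 d a (1/e^2 * y$0) (1/e^2 * y$1) (e^4 * y$2) = (1/e^2)^d * F3 d a (y$0) (y$1) (e^6 * y$2)" for d a
      by (rule F3_hom2) (use e in \<open>simp_all add: field_simps flip: power_add\<close>)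
    show "act (dg2 (1/e^3) (e^3)) (dg3 (1/e^2) (1/e^2) (e^4)) (\<lambda>x y.
         x$1^2 * form3 3 c y + x$0 * x$1 * y$2 * form2 2 q (y$0) (y$1)
         + x$0^2 * y$2^2 * form3 1 l y) x y = x$1^2 * F3 3 c (y$0) (y$1) (e^6 * y$2) + x$0 * x$1 * y$2 * form2 2 q (y$0) (y$1)
         + x$0^2 * y$2^2 * F3 1 l (y$0) (y$1) (e^6 * y$2)"
      unfolding act_def form3_F3 dg2_mv dg3_mv h1 form2_hom
      using e by (simp add: field_simps flip: power_add)
  qed
  show "\<And>x y. isCont (\<lambda>e. x$1^2 * F3 3 c (y$0) (y$1) (e^6 * y$2) + x$0 * x$1 * y$2 * form2 2 q (y$0) (y$1)
         + x$0^2 * y$2^2 * F3 1 l (y$0) (y$1) (e^6 * y$2)) 0"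
    by (intro continuous_intros)
qed

lemma N2: "\<not> properly_stable (\<lambda>x y. x$1^2 * form3 3 c0 y + x$0 * x$1 * (form2 3 c1 (y$1) (y$2) + y$0 * y$2 * form2 1 l (y$1) (y$2)) + \<mu> * x$0^2 * y$2^3)"
proof (rule not_ps_general[where G="\<lambda>e. dg2 (1/e^3) (e^3)" and K="\<lambda>e. dg3 (1/e^2) 1 (e^2)"
      and P="\<lambda>e x y. x$1^2 * F3 3 c0 (y$0) (e^2 * y$1) (e^4 * y$2) + x$0 * x$1 * (form2 3 c1 (y$1) (e^2 * y$2) + y$0 * y$2 * form2 1 l (y$1) (e^2 * y$2)) + \<mu> * x$0^2 * y$2^3"])
  show "\<And>e. e \<noteq> 0 \<Longrightarrow> dg2 (1/e^3) (e^3) \<in> SL2 \<and> dg3 (1/e^2) 1 (e^2) \<in> SL3"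
    by (simp add: SL2_def SL3_def dg2_det dg3_det field_simps flip: power_add; simp add: power2_eq_square)
  show "\<And>e d. e \<noteq> 0 \<Longrightarrow> d \<noteq> 0 \<Longrightarrow> dg2 (1/e^3) (e^3) ** dg2 (1/d^3) (d^3) = dg2 (1/(d*e)^3) ((d*e)^3)
     \<and> dg3 (1/e^2) 1 (e^2) ** dg3 (1/d^2) 1 (d^2) = dg3 (1/(d*e)^2) 1 ((d*e)^2)"
    by (simp add: dg2_mul dg3_mul power_mult_distrib)
  show "inj (\<lambda>n::nat. (dg2 (1/(of_nat (Suc n))^3) ((of_nat (Suc n))^3), dg3 (1/(of_nat (Suc n))^2) 1 ((of_nat (Suc n))^2)))"
    by (rule injI) (auto simp: dg2_eq dg3_eq simp del: of_nat_Suc dest: of_nat_pow_inj)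
  show "act (dg2 (1/e^3) (e^3)) (dg3 (1/e^2) 1 (e^2)) (\<lambda>x y. x$1^2 * form3 3 c0 y + x$0 * x$1 * (form2 3 c1 (y$1) (y$2) + y$0 * y$2 * form2 1 l (y$1) (y$2)) + \<mu> * x$0^2 * y$2^3) = (\<lambda>x y. x$1^2 * F3 3 c0 (y$0) (e^2 * y$1) (e^4 * y$2) + x$0 * x$1 * (form2 3 c1 (y$1) (e^2 * y$2) + y$0 * y$2 * form2 1 l (y$1) (e^2 * y$2)) + \<mu> * x$0^2 * y$2^3)" if e: "e \<noteq> 0" for e
  proof (rule ext, rule ext)
    fix x :: "complex^2" and y :: "complex^3"
    have h0: "F3 d a (1/e^2 * y$0) (1 * y$1) (e^2 * y$2) = (1/e^2)^d * F3 d a (y$0) (e^2 * y$1) (e^4 * y$2)" for d a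
      using e by (intro F3_hom2) (simp_all add: field_simps eval_nat_numeral)
    show "act (dg2 (1/e^3) (e^3)) (dg3 (1/e^2) 1 (e^2)) (\<lambda>x y. x$1^2 * form3 3 c0 y + x$0 * x$1 * (form2 3 c1 (y$1) (y$2) + y$0 * y$2 * form2 1 l (y$1) (y$2)) + \<mu> * x$0^2 * y$2^3) x y = x$1^2 * F3 3 c0 (y$0) (e^2 * y$1) (e^4 * y$2) + x$0 * x$1 * (form2 3 c1 (y$1) (e^2 * y$2) + y$0 * y$2 * form2 1 l (y$1) (e^2 * y$2)) + \<mu> * x$0^2 * y$2^3"
      unfolding act_def form3_F3 dg2_mv dg3_mv h0 form2_hom 
      using e by (simp add: field_simps flip: power_add sum_divide_distrib)
  qed
  show "\<And>x y. isCont (\<lambda>e. x$1^2 * F3 3 c0 (y$0) (e^2 * y$1) (e^4 * y$2) + x$0 * x$1 * (form2 3 c1 (y$1) (e^2 * y$2) + y$0 * y$2 * form2 1 l (y$1) (e^2 * y$2)) + \<mu> * x$0^2 * y$2^3) 0"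
    by (intro continuous_intros)
qed

lemma N3: "\<not> properly_stable (\<lambda>x y. x$1^2 * (form2 3 c1 (y$1) (y$2) + y$0 * form2 2 q1 (y$1) (y$2) + y$0^2 * form2 1 l (y$1) (y$2)) + x$0 * x$1 * (form2 3 c2 (y$1) (y$2) + y$0 * form2 2 q2 (y$1) (y$2)) + x$0^2 * form2 3 c0 (y$1) (y$2))"
proof (rule not_ps_general[where G="\<lambda>e. dg2 (1/e^3) (e^3)" and K="\<lambda>e. dg3 (1/e^4) (e^2) (e^2)"
      and P="\<lambda>e x y. x$1^2 * (e^12 * form2 3 c1 (y$1) (y$2) + e^6 * y$0 * form2 2 q1 (y$1) (y$2) + y$0^2 * form2 1 l (y$1) (y$2)) + x$0 * x$1 * (e^6 * form2 3 c2 (y$1) (y$2) + y$0 * form2 2 q2 (y$1) (y$2)) + x$0^2 * form2 3 c0 (y$1) (y$2)"])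
  show "\<And>e. e \<noteq> 0 \<Longrightarrow> dg2 (1/e^3) (e^3) \<in> SL2 \<and> dg3 (1/e^4) (e^2) (e^2) \<in> SL3"
    by (simp add: SL2_def SL3_def dg2_det dg3_det field_simps flip: power_add; simp add: power2_eq_square)
  show "\<And>e d. e \<noteq> 0 \<Longrightarrow> d \<noteq> 0 \<Longrightarrow> dg2 (1/e^3) (e^3) ** dg2 (1/d^3) (d^3) = dg2 (1/(d*e)^3) ((d*e)^3)
     \<and> dg3 (1/e^4) (e^2) (e^2) ** dg3 (1/d^4) (d^2) (d^2) = dg3 (1/(d*e)^4) ((d*e)^2) ((d*e)^2)"
    by (simp add: dg2_mul dg3_mul power_mult_distrib)
  show "inj (\<lambda>n::nat. (dg2 (1/(of_nat (Suc n))^3) ((of_nat (Suc n))^3), dg3 (1/(of_nat (Suc n))^4) ((of_nat (Suc n))^2) ((of_nat (Suc n))^2)))"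
    by (rule injI) (auto simp: dg2_eq dg3_eq simp del: of_nat_Suc dest: of_nat_pow_inj)
  show "act (dg2 (1/e^3) (e^3)) (dg3 (1/e^4) (e^2) (e^2)) (\<lambda>x y. x$1^2 * (form2 3 c1 (y$1) (y$2) + y$0 * form2 2 q1 (y$1) (y$2) + y$0^2 * form2 1 l (y$1) (y$2)) + x$0 * x$1 * (form2 3 c2 (y$1) (y$2) + y$0 * form2 2 q2 (y$1) (y$2)) + x$0^2 * form2 3 c0 (y$1) (y$2)) = (\<lambda>x y. x$1^2 * (e^12 * form2 3 c1 (y$1) (y$2) + e^6 * y$0 * form2 2 q1 (y$1) (y$2) + y$0^2 * form2 1 l (y$1) (y$2)) + x$0 * x$1 * (e^6 * form2 3 c2 (y$1) (y$2) + y$0 * form2 2 q2 (y$1) (y$2)) + x$0^2 * form2 3 c0 (y$1) (y$2))" if e: "e \<noteq> 0" for e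
  proof (rule ext, rule ext)
    fix x :: "complex^2" and y :: "complex^3"

    show "act (dg2 (1/e^3) (e^3)) (dg3 (1/e^4) (e^2) (e^2)) (\<lambda>x y. x$1^2 * (form2 3 c1 (y$1) (y$2) + y$0 * form2 2 q1 (y$1) (y$2) + y$0^2 * form2 1 l (y$1) (y$2)) + x$0 * x$1 * (form2 3 c2 (y$1) (y$2) + y$0 * form2 2 q2 (y$1) (y$2)) + x$0^2 * form2 3 c0 (y$1) (y$2)) x y = x$1^2 * (e^12 * form2 3 c1 (y$1) (y$2) + e^6 * y$0 * form2 2 q1 (y$1) (y$2) + y$0^2 * form2 1 l (y$1) (y$2)) + x$0 * x$1 * (e^6 * form2 3 c2 (y$1) (y$2) + y$0 * form2 2 q2 (y$1) (y$2)) + x$0^2 * form2 3 c0 (y$1) (y$2)"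
      unfolding act_def form3_F3 dg2_mv dg3_mv  form2_hom 
      using e by (simp add: field_simps flip: power_add sum_divide_distrib)
  qed
  show "\<And>x y. isCont (\<lambda>e. x$1^2 * (e^12 * form2 3 c1 (y$1) (y$2) + e^6 * y$0 * form2 2 q1 (y$1) (y$2) + y$0^2 * form2 1 l (y$1) (y$2)) + x$0 * x$1 * (e^6 * form2 3 c2 (y$1) (y$2) + y$0 * form2 2 q2 (y$1) (y$2)) + x$0^2 * form2 3 c0 (y$1) (y$2)) 0"
    by (intro continuous_intros)
qed

lemma N4: "\<not> properly_stable (\<lambda>x y. x$1^2 * (form2 3 c0 (y$1) (y$2) + y$0 * form2 2 q0 (y$1) (y$2)) + x$0 * x$1 * (form2 3 c1 (y$1) (y$2) + y$0 * form2 2 q1 (y$1) (y$2)) + x$0^2 * (form2 3 c2 (y$1) (y$2) + y$0 * form2 2 q2 (y$1) (y$2)))"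
proof (rule not_ps_general[where G="\<lambda>e. dg2 1 1" and K="\<lambda>e. dg3 (1/e^2) e e"
      and P="\<lambda>e x y. x$1^2 * (e^3 * form2 3 c0 (y$1) (y$2) + y$0 * form2 2 q0 (y$1) (y$2)) + x$0 * x$1 * (e^3 * form2 3 c1 (y$1) (y$2) + y$0 * form2 2 q1 (y$1) (y$2)) + x$0^2 * (e^3 * form2 3 c2 (y$1) (y$2) + y$0 * form2 2 q2 (y$1) (y$2))"])
  show "\<And>e. e \<noteq> 0 \<Longrightarrow> dg2 1 1 \<in> SL2 \<and> dg3 (1/e^2) e e \<in> SL3"
    by (simp add: SL2_def SL3_def dg2_det dg3_det field_simps flip: power_add; simp add: power2_eq_square)
  show "\<And>e d. e \<noteq> 0 \<Longrightarrow> d \<noteq> 0 \<Longrightarrow> dg2 1 1 ** dg2 1 1 = dg2 1 1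
     \<and> dg3 (1/e^2) e e ** dg3 (1/d^2) d d = dg3 (1/(d*e)^2) (d*e) (d*e)"
    by (simp add: dg2_mul dg3_mul power_mult_distrib)
  show "inj (\<lambda>n::nat. (dg2 1 1, dg3 (1/(of_nat (Suc n))^2) (of_nat (Suc n)) (of_nat (Suc n))))"
    by (rule injI) (auto simp: dg2_eq dg3_eq simp del: of_nat_Suc dest: of_nat_pow_inj)
  show "act (dg2 1 1) (dg3 (1/e^2) e e) (\<lambda>x y. x$1^2 * (form2 3 c0 (y$1) (y$2) + y$0 * form2 2 q0 (y$1) (y$2)) + x$0 * x$1 * (form2 3 c1 (y$1) (y$2) + y$0 * form2 2 q1 (y$1) (y$2)) + x$0^2 * (form2 3 c2 (y$1) (y$2) + y$0 * form2 2 q2 (y$1) (y$2))) = (\<lambda>x y. x$1^2 * (e^3 * form2 3 c0 (y$1) (y$2) + y$0 * form2 2 q0 (y$1) (y$2)) + x$0 * x$1 * (e^3 * form2 3 c1 (y$1) (y$2) + y$0 * form2 2 q1 (y$1) (y$2)) + x$0^2 * (e^3 * form2 3 c2 (y$1) (y$2) + y$0 * form2 2 q2 (y$1) (y$2)))" if e: "e \<noteq> 0" for e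
  proof (rule ext, rule ext)
    fix x :: "complex^2" and y :: "complex^3"

    show "act (dg2 1 1) (dg3 (1/e^2) e e) (\<lambda>x y. x$1^2 * (form2 3 c0 (y$1) (y$2) + y$0 * form2 2 q0 (y$1) (y$2)) + x$0 * x$1 * (form2 3 c1 (y$1) (y$2) + y$0 * form2 2 q1 (y$1) (y$2)) + x$0^2 * (form2 3 c2 (y$1) (y$2) + y$0 * form2 2 q2 (y$1) (y$2))) x y = x$1^2 * (e^3 * form2 3 c0 (y$1) (y$2) + y$0 * form2 2 q0 (y$1) (y$2)) + x$0 * x$1 * (e^3 * form2 3 c1 (y$1) (y$2) + y$0 * form2 2 q1 (y$1) (y$2)) + x$0^2 * (e^3 * form2 3 c2 (y$1) (y$2) + y$0 * form2 2 q2 (y$1) (y$2))"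
      unfolding act_def form3_F3 dg2_mv dg3_mv  form2_hom 
      using e by (simp add: field_simps flip: power_add sum_divide_distrib)
  qed
  show "\<And>x y. isCont (\<lambda>e. x$1^2 * (e^3 * form2 3 c0 (y$1) (y$2) + y$0 * form2 2 q0 (y$1) (y$2)) + x$0 * x$1 * (e^3 * form2 3 c1 (y$1) (y$2) + y$0 * form2 2 q1 (y$1) (y$2)) + x$0^2 * (e^3 * form2 3 c2 (y$1) (y$2) + y$0 * form2 2 q2 (y$1) (y$2))) 0"
    by (intro continuous_intros)
qed

lemma N5: "\<not> properly_stable (\<lambda>x y. x$1^2 * (form2 3 c0 (y$1) (y$2) + y$0 * form2 2 q0 (y$1) (y$2) + \<mu> * y$0^2 * y$2) + x$0 * x$1 * (form2 3 c1 (y$1) (y$2) + y$0 * y$2 * form2 1 l (y$1) (y$2)) + x$0^2 * y$2 * (form2 2 q2 (y$1) (y$2) + \<nu> * y$0 * y$2))"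
proof (rule not_ps_general[where G="\<lambda>e. dg2 (1/e) e" and K="\<lambda>e. dg3 (1/e^2) 1 (e^2)"
      and P="\<lambda>e x y. x$1^2 * (e^2 * form2 3 c0 (y$1) (e^2 * y$2) + y$0 * form2 2 q0 (y$1) (e^2 * y$2) + \<mu> * y$0^2 * y$2) + x$0 * x$1 * (form2 3 c1 (y$1) (e^2 * y$2) + y$0 * y$2 * form2 1 l (y$1) (e^2 * y$2)) + x$0^2 * y$2 * (form2 2 q2 (y$1) (e^2 * y$2) + \<nu> * y$0 * y$2)"])
  show "\<And>e. e \<noteq> 0 \<Longrightarrow> dg2 (1/e) e \<in> SL2 \<and> dg3 (1/e^2) 1 (e^2) \<in> SL3"
    by (simp add: SL2_def SL3_def dg2_det dg3_det field_simps flip: power_add; simp add: power2_eq_square)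
  show "\<And>e d. e \<noteq> 0 \<Longrightarrow> d \<noteq> 0 \<Longrightarrow> dg2 (1/e) e ** dg2 (1/d) d = dg2 (1/(d*e)) (d*e)
     \<and> dg3 (1/e^2) 1 (e^2) ** dg3 (1/d^2) 1 (d^2) = dg3 (1/(d*e)^2) 1 ((d*e)^2)"
    by (simp add: dg2_mul dg3_mul power_mult_distrib)
  show "inj (\<lambda>n::nat. (dg2 (1/(of_nat (Suc n))) (of_nat (Suc n)), dg3 (1/(of_nat (Suc n))^2) 1 ((of_nat (Suc n))^2)))"
    by (rule injI) (auto simp: dg2_eq dg3_eq simp del: of_nat_Suc dest: of_nat_pow_inj)
  show "act (dg2 (1/e) e) (dg3 (1/e^2) 1 (e^2)) (\<lambda>x y. x$1^2 * (form2 3 c0 (y$1) (y$2) + y$0 * form2 2 q0 (y$1) (y$2) + \<mu> * y$0^2 * y$2) + x$0 * x$1 * (form2 3 c1 (y$1) (y$2) + y$0 * y$2 * form2 1 l (y$1) (y$2)) + x$0^2 * y$2 * (form2 2 q2 (y$1) (y$2) + \<nu> * y$0 * y$2)) = (\<lambda>x y. x$1^2 * (e^2 * form2 3 c0 (y$1) (e^2 * y$2) + y$0 * form2 2 q0 (y$1) (e^2 * y$2) + \<mu> * y$0^2 * y$2) + x$0 * x$1 * (form2 3 c1 (y$1) (e^2 * y$2) + y$0 * y$2 * form2 1 l (y$1) (e^2 * y$2)) + x$0^2 * y$2 * (form2 2 q2 (y$1) (e^2 * y$2) + \<nu> * y$0 * y$2))" if e: "e \<noteq> 0" for e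
  proof (rule ext, rule ext)
    fix x :: "complex^2" and y :: "complex^3"

    show "act (dg2 (1/e) e) (dg3 (1/e^2) 1 (e^2)) (\<lambda>x y. x$1^2 * (form2 3 c0 (y$1) (y$2) + y$0 * form2 2 q0 (y$1) (y$2) + \<mu> * y$0^2 * y$2) + x$0 * x$1 * (form2 3 c1 (y$1) (y$2) + y$0 * y$2 * form2 1 l (y$1) (y$2)) + x$0^2 * y$2 * (form2 2 q2 (y$1) (y$2) + \<nu> * y$0 * y$2)) x y = x$1^2 * (e^2 * form2 3 c0 (y$1) (e^2 * y$2) + y$0 * form2 2 q0 (y$1) (e^2 * y$2) + \<mu> * y$0^2 * y$2) + x$0 * x$1 * (form2 3 c1 (y$1) (e^2 * y$2) + y$0 * y$2 * form2 1 l (y$1) (e^2 * y$2)) + x$0^2 * y$2 * (form2 2 q2 (y$1) (e^2 * y$2) + \<nu> * y$0 * y$2)"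
      unfolding act_def form3_F3 dg2_mv dg3_mv  form2_hom 
      using e by (simp add: field_simps flip: power_add sum_divide_distrib)
  qed
  show "\<And>x y. isCont (\<lambda>e. x$1^2 * (e^2 * form2 3 c0 (y$1) (e^2 * y$2) + y$0 * form2 2 q0 (y$1) (e^2 * y$2) + \<mu> * y$0^2 * y$2) + x$0 * x$1 * (form2 3 c1 (y$1) (e^2 * y$2) + y$0 * y$2 * form2 1 l (y$1) (e^2 * y$2)) + x$0^2 * y$2 * (form2 2 q2 (y$1) (e^2 * y$2) + \<nu> * y$0 * y$2)) 0"
    by (intro continuous_intros)
qed

lemma N6: "\<not> properly_stable (\<lambda>x y. y$2 * form22 q x y)"
proof (rule not_ps_general[where G="\<lambda>e. dg2 1 1" and K="\<lambda>e. dg3 (1/e) (1/e) (e^2)"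
      and P="\<lambda>e x y. y$2 * (\<Sum>u\<le>2. x$0 ^ u * x$1 ^ (2 - u) * F3 2 (q u) (y$0) (y$1) (e^3 * y$2))"])
  show "\<And>e. e \<noteq> 0 \<Longrightarrow> dg2 1 1 \<in> SL2 \<and> dg3 (1/e) (1/e) (e^2) \<in> SL3"
    by (simp add: SL2_def SL3_def dg2_det dg3_det field_simps flip: power_add; simp add: power2_eq_square)
  show "\<And>e d. e \<noteq> 0 \<Longrightarrow> d \<noteq> 0 \<Longrightarrow> dg2 1 1 ** dg2 1 1 = dg2 1 1
     \<and> dg3 (1/e) (1/e) (e^2) ** dg3 (1/d) (1/d) (d^2) = dg3 (1/(d*e)) (1/(d*e)) ((d*e)^2)"
    by (simp add: dg2_mul dg3_mul power_mult_distrib)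
  show "inj (\<lambda>n::nat. (dg2 1 1, dg3 (1/(of_nat (Suc n))) (1/(of_nat (Suc n))) ((of_nat (Suc n))^2)))"
    by (rule injI) (auto simp: dg2_eq dg3_eq simp del: of_nat_Suc dest: of_nat_pow_inj)
  show "act (dg2 1 1) (dg3 (1/e) (1/e) (e^2)) (\<lambda>x y. y$2 * form22 q x y) = (\<lambda>x y. y$2 * (\<Sum>u\<le>2. x$0 ^ u * x$1 ^ (2 - u) * F3 2 (q u) (y$0) (y$1) (e^3 * y$2)))" if e: "e \<noteq> 0" for e
  proof (rule ext, rule ext)
    fix x :: "complex^2" and y :: "complex^3"
    have h0: "F3 d a (1/e * y$0) (1/e * y$1) (e^2 * y$2) = (1/e)^d * F3 d a (y$0) (y$1) (e^3 * y$2)" for d a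
      using e by (intro F3_hom2) (simp_all add: field_simps eval_nat_numeral)
    show "act (dg2 1 1) (dg3 (1/e) (1/e) (e^2)) (\<lambda>x y. y$2 * form22 q x y) x y = y$2 * (\<Sum>u\<le>2. x$0 ^ u * x$1 ^ (2 - u) * F3 2 (q u) (y$0) (y$1) (e^3 * y$2))"
      unfolding act_def form3_F3 dg2_mv dg3_mv h0 form2_hom form22_def
      using e by (simp add: field_simps flip: power_add sum_divide_distrib)
  qed
  show "\<And>x y. isCont (\<lambda>e. y$2 * (\<Sum>u\<le>2. x$0 ^ u * x$1 ^ (2 - u) * F3 2 (q u) (y$0) (y$1) (e^3 * y$2))) 0"
    by (intro continuous_intros)
qed




lemma mons_eq: "mons = {(0,0,0), (0,0,1), (0,0,2), (0,0,3), (0,1,0), (0,1,1), (0,1,2), (0,2,0), (0,2,1), (0,3,0), (1,0,0), (1,0,1), (1,0,2), (1,0,3), (1,1,0), (1,1,1), (1,1,2), (1,2,0), (1,2,1), (1,3,0), (2,0,0), (2,0,1), (2,0,2), (2,0,3), (2,1,0), (2,1,1), (2,1,2), (2,2,0), (2,2,1), (2,3,0)}"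
proof
  show "mons \<subseteq> {(0,0,0), (0,0,1), (0,0,2), (0,0,3), (0,1,0), (0,1,1), (0,1,2), (0,2,0), (0,2,1), (0,3,0), (1,0,0), (1,0,1), (1,0,2), (1,0,3), (1,1,0), (1,1,1), (1,1,2), (1,2,0), (1,2,1), (1,3,0), (2,0,0), (2,0,1), (2,0,2), (2,0,3), (2,1,0), (2,1,1), (2,1,2), (2,2,0), (2,2,1), (2,3,0)}"
  proof
    fix m assume "m \<in> mons"
    then obtain u v w where m: "m = (u, v, w)" "u \<le> 2" "v + w \<le> 3" by (auto simp: mons_def)
    have "u = 0 \<or> u = 1 \<or> u = 2" using m by arith
    moreover have "v = 0 \<or> v = 1 \<or> v = 2 \<or> v = 3" using m by arith
    moreover have "w = 0 \<or> w = 1 \<or> w = 2 \<or> w = 3" using m by arith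
    ultimately show "m \<in> {(0,0,0), (0,0,1), (0,0,2), (0,0,3), (0,1,0), (0,1,1), (0,1,2), (0,2,0), (0,2,1), (0,3,0), (1,0,0), (1,0,1), (1,0,2), (1,0,3), (1,1,0), (1,1,1), (1,1,2), (1,2,0), (1,2,1), (1,3,0), (2,0,0), (2,0,1), (2,0,2), (2,0,3), (2,1,0), (2,1,1), (2,1,2), (2,2,0), (2,2,1), (2,3,0)}" using m by (elim disjE) simp_all
  qed
qed (auto simp: mons_def)

lemma Mneg_sub: "Mneg l \<subseteq> Mneg l' \<longleftrightarrow> (\<forall>m\<in>mons. wt l m \<le> 0 \<longrightarrow> wt l' m \<le> 0)"
  by (auto simp: Mneg_def)

lemma sub1:
  fixes a b c :: int
  assumes "0 < (3)*c"
    and "0 < (1)*b + (2)*c"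
    and "0 < (2)*b + (1)*c"
    and "0 < (3)*b"
    and "0 < (2)*a + (-1)*b + (1)*c"
    and "0 < (2)*a"
    and "0 < (2)*a + (3)*c"
    and "0 < (2)*a + (1)*b + (-1)*c"
    and "0 < (2)*a + (1)*b + (2)*c"
    and "0 < (2)*a + (2)*b + (1)*c"
    and "0 < (2)*a + (3)*b"
  shows "Mneg (a, b, c) \<subseteq> Mneg (lam' 1)"
  using assms unfolding Mneg_sub mons_eq by (simp add: wt_def lam'_def)

lemma sub2:
  fixes a b c :: int
  assumes "0 < (1)*b + (-1)*c"
    and "0 < (1)*b + (2)*c"
    and "0 < (2)*b + (1)*c"
    and "0 < (3)*b"
    and "0 < (2)*a + (-2)*b + (-1)*c"
    and "0 < (2)*a + (-1)*b + (-2)*c"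
    and "0 < (2)*a + (-1)*b + (1)*c"
    and "0 < (2)*a"
    and "0 < (2)*a + (3)*c"
    and "0 < (2)*a + (1)*b + (-1)*c"
    and "0 < (2)*a + (1)*b + (2)*c"
    and "0 < (2)*a + (2)*b + (1)*c"
    and "0 < (2)*a + (3)*b"
  shows "Mneg (a, b, c) \<subseteq> Mneg (lam' 2)"
  using assms unfolding Mneg_sub mons_eq by (simp add: wt_def lam'_def)

lemma sub3:
  fixes a b c :: int
  assumes "0 < (-2)*a + (3)*b"
    and "0 < (1)*b + (-1)*c"
    and "0 < (2)*b + (1)*c"
    and "0 < (3)*b"
    and "0 < (2)*a + (-1)*b + (-2)*c"
    and "0 < (2)*a"
    and "0 < (2)*a + (1)*b + (-1)*c"
    and "0 < (2)*a + (1)*b + (2)*c"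
    and "0 < (2)*a + (2)*b + (1)*c"
    and "0 < (2)*a + (3)*b"
  shows "Mneg (a, b, c) \<subseteq> Mneg (lam' 3)"
  using assms unfolding Mneg_sub mons_eq by (simp add: wt_def lam'_def)

lemma sub4:
  fixes a b c :: int
  assumes "0 < (-2)*a + (1)*b + (-1)*c"
    and "0 < (-2)*a + (2)*b + (1)*c"
    and "0 < (-2)*a + (3)*b"
    and "0 < (1)*b + (-1)*c"
    and "0 < (2)*b + (1)*c"
    and "0 < (3)*b"
    and "0 < (2)*a + (1)*b + (-1)*c"
    and "0 < (2)*a + (2)*b + (1)*c"
    and "0 < (2)*a + (3)*b"
  shows "Mneg (a, b, c) \<subseteq> Mneg (lam' 4)"
  using assms unfolding Mneg_sub mons_eq by (simp add: wt_def lam'_def)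

lemma sub5:
  fixes a b c :: int
  assumes "0 < (-2)*a + (2)*b + (1)*c"
    and "0 < (-2)*a + (3)*b"
    and "0 < (1)*b + (-1)*c"
    and "0 < (1)*b + (2)*c"
    and "0 < (2)*b + (1)*c"
    and "0 < (3)*b"
    and "0 < (2)*a"
    and "0 < (2)*a + (3)*c"
    and "0 < (2)*a + (1)*b + (-1)*c"
    and "0 < (2)*a + (1)*b + (2)*c"
    and "0 < (2)*a + (2)*b + (1)*c"
    and "0 < (2)*a + (3)*b"
  shows "Mneg (a, b, c) \<subseteq> Mneg (lam' 5)"
  using assms unfolding Mneg_sub mons_eq by (simp add: wt_def lam'_def)

lemma sub6:
  fixes a b c :: int
  assumes "0 < (-2)*a + (3)*c"
    and "0 < (-2)*a + (1)*b + (2)*c"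
    and "0 < (-2)*a + (2)*b + (1)*c"
    and "0 < (-2)*a + (3)*b"
    and "0 < (3)*c"
    and "0 < (1)*b + (2)*c"
    and "0 < (2)*b + (1)*c"
    and "0 < (3)*b"
    and "0 < (2)*a + (3)*c"
    and "0 < (2)*a + (1)*b + (2)*c"
    and "0 < (2)*a + (2)*b + (1)*c"
    and "0 < (2)*a + (3)*b"
  shows "Mneg (a, b, c) \<subseteq> Mneg (lam' 6)"
  using assms unfolding Mneg_sub mons_eq by (simp add: wt_def lam'_def)

lemma sub7:
  fixes a b c :: int
  assumes "0 < (2)*a + (-3)*b + (-3)*c"
    and "0 < (2)*a + (-2)*b + (-1)*c"
    and "0 < (2)*a + (-1)*b + (-2)*c"
    and "0 < (2)*a + (-1)*b + (1)*c"
    and "0 < (2)*a"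
    and "0 < (2)*a + (3)*c"
    and "0 < (2)*a + (1)*b + (-1)*c"
    and "0 < (2)*a + (1)*b + (2)*c"
    and "0 < (2)*a + (2)*b + (1)*c"
    and "0 < (2)*a + (3)*b"
  shows "Mneg (a, b, c) \<subseteq> Mneg (lam' 7)"
  using assms unfolding Mneg_sub mons_eq by (simp add: wt_def lam'_def)


lemma part1: "\<forall>l. normalized_ops l \<and> nontrivial_ops l \<longrightarrow> (\<exists>i\<in>{1..7}. Mneg l \<subseteq> Mneg (lam' i))"
proof (intro allI impI)
  fix l assume h: "normalized_ops l \<and> nontrivial_ops l"
  obtain a b c where l: "l = (a, b, c)" by (cases l)
  have n: "a \<ge> 0" "c \<le> b" "c \<ge> - b - c"
    using h l by (auto simp: normalized_ops_def)
  have nt: "\<not> (a = 0 \<and> b = 0 \<and> c = 0)" using h l by (auto simp: nontrivial_ops_def)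
  have "\<exists>i\<in>{1..7}. Mneg (a, b, c) \<subseteq> Mneg (lam' i)"
  proof (cases "c = b")
    case cb: True
    show ?thesis
    proof (cases "b = 0")
      case b0: True
      then have a: "a > 0" using nt cb n by auto
      have "Mneg (a, b, c) \<subseteq> Mneg (lam' 7)" by (rule sub7) (use n cb b0 a in linarith)+
      then show ?thesis by (intro bexI[of _ 7]) auto
    next
      case b0: False
      then have b: "b > 0" using cb n by auto
      show ?thesis
      proof (cases "a = 0")
        case True
        have "Mneg (a, b, c) \<subseteq> Mneg (lam' 6)" by (rule sub6) (use n cb b True in linarith)+
      then show ?thesis by (intro bexI[of _ 6]) auto
      next
        case False
        have "Mneg (a, b, c) \<subseteq> Mneg (lam' 1)" by (rule sub1) (use n cb b False in linarith)+
      then show ?thesis by (intro bexI[of _ 1]) auto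
      qed
    qed
  next
    case cb: False
    then have cb': "c < b" using n by auto
    show ?thesis
    proof (cases "b + 2 * c = 0")
      case e: True
      then have b: "b > 0" using cb' by auto
      show ?thesis
      proof (cases "a = 0")
        case True
        have "Mneg (a, b, c) \<subseteq> Mneg (lam' 4)" by (rule sub4) (use n cb' e b True in linarith)+
      then show ?thesis by (intro bexI[of _ 4]) auto
      next
        case a: False
        show ?thesis
        proof (cases "2 * a < 3 * b")
          case True
          have "Mneg (a, b, c) \<subseteq> Mneg (lam' 3)" by (rule sub3) (use n cb' e b a True in linarith)+
      then show ?thesis by (intro bexI[of _ 3]) auto
        next
          case False
          have "Mneg (a, b, c) \<subseteq> Mneg (lam' 7)" by (rule sub7) (use n cb' e b a False in linarith)+
      then show ?thesis by (intro bexI[of _ 7]) auto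
        qed
      qed
    next
      case e: False
      then have e': "b + 2 * c > 0" using n by auto
      show ?thesis
      proof (cases "2 * a < b - c")
        case True
        have "Mneg (a, b, c) \<subseteq> Mneg (lam' 4)" by (rule sub4) (use n cb' e' True in linarith)+
      then show ?thesis by (intro bexI[of _ 4]) auto
      next
        case f1: False
        show ?thesis
        proof (cases "2 * a > 2 * b + c")
          case True
          have "Mneg (a, b, c) \<subseteq> Mneg (lam' 2)" by (rule sub2) (use n cb' e' f1 True in linarith)+
      then show ?thesis by (intro bexI[of _ 2]) auto
        next
          case f2: False
          show ?thesis
          proof (cases "2 * a < 2 * b + c")
            case True
            have "Mneg (a, b, c) \<subseteq> Mneg (lam' 5)" by (rule sub5) (use n cb' e' f1 f2 True in linarith)+
      then show ?thesis by (intro bexI[of _ 5]) auto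
          next
            case f3: False
            show ?thesis
            proof (cases "c > 0")
              case True
              have "Mneg (a, b, c) \<subseteq> Mneg (lam' 1)" by (rule sub1) (use n cb' e' f1 f2 f3 True in linarith)+
      then show ?thesis by (intro bexI[of _ 1]) auto
            next
              case False
              have "Mneg (a, b, c) \<subseteq> Mneg (lam' 3)" by (rule sub3) (use n cb' e' f1 f2 f3 False in linarith)+
      then show ?thesis by (intro bexI[of _ 3]) auto
            qed
          qed
        qed
      qed
    qed
  qed
  then show "\<exists>i\<in>{1..7}. Mneg l \<subseteq> Mneg (lam' i)" using l by simp
qed


theorem lemma3p1:
  shows "(\<forall>l. normalized_ops l \<and> nontrivial_ops l \<longrightarrow>
            (\<exists>i\<in>{1..7}. Mneg l \<subseteq> Mneg (lam' i)))
   \<and> (\<forall>c q l. \<not> properly_stable (\<lambda>x y.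
         x$1^2 * form3 3 c y + x$0 * x$1 * y$2 * form2 2 q (y$0) (y$1)
         + x$0^2 * y$2^2 * form3 1 l y))
   \<and> (\<forall>c0 c1 l \<mu>. \<not> properly_stable (\<lambda>x y.
         x$1^2 * form3 3 c0 y
         + x$0 * x$1 * (form2 3 c1 (y$1) (y$2) + y$0 * y$2 * form2 1 l (y$1) (y$2))
         + \<mu> * x$0^2 * y$2^3))
   \<and> (\<forall>c0 c1 c2 q1 q2 l. \<not> properly_stable (\<lambda>x y.
         x$1^2 * (form2 3 c1 (y$1) (y$2) + y$0 * form2 2 q1 (y$1) (y$2) + y$0^2 * form2 1 l (y$1) (y$2))
         + x$0 * x$1 * (form2 3 c2 (y$1) (y$2) + y$0 * form2 2 q2 (y$1) (y$2))
         + x$0^2 * form2 3 c0 (y$1) (y$2)))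
   \<and> (\<forall>c0 c1 c2 q0 q1 q2. \<not> properly_stable (\<lambda>x y.
         x$1^2 * (form2 3 c0 (y$1) (y$2) + y$0 * form2 2 q0 (y$1) (y$2))
         + x$0 * x$1 * (form2 3 c1 (y$1) (y$2) + y$0 * form2 2 q1 (y$1) (y$2))
         + x$0^2 * (form2 3 c2 (y$1) (y$2) + y$0 * form2 2 q2 (y$1) (y$2))))
   \<and> (\<forall>c0 c1 q0 q2 l \<mu> \<nu>. \<not> properly_stable (\<lambda>x y.
         x$1^2 * (form2 3 c0 (y$1) (y$2) + y$0 * form2 2 q0 (y$1) (y$2) + \<mu> * y$0^2 * y$2)
         + x$0 * x$1 * (form2 3 c1 (y$1) (y$2) + y$0 * y$2 * form2 1 l (y$1) (y$2))
         + x$0^2 * y$2 * (form2 2 q2 (y$1) (y$2) + \<nu> * y$0 * y$2)))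
   \<and> (\<forall>q. \<not> properly_stable (\<lambda>x y. y$2 * form22 q x y))
   \<and> (\<forall>c0 c1. \<not> properly_stable (\<lambda>x y.
         x$1 * (x$0 * form3 3 c0 y + x$1 * form3 3 c1 y)))"
    apply (rule conjI, rule part1)
  apply (rule conjI, (intro allI)?, rule N1)
  apply (rule conjI, (intro allI)?, rule N2)
  apply (rule conjI, (intro allI)?, rule N3)
  apply (rule conjI, (intro allI)?, rule N4)
  apply (rule conjI, (intro allI)?, rule N5)
  apply (rule conjI, (intro allI)?, rule N6)
  apply ((intro allI)?, rule N7)
  done

end
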